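(* Let $n\geq 4$. Then $d_{\Gamma_n}=2J-A_{\Gamma_n}$, where $A_{\Gamma_n}$ is the adjacency matrix of $\Gamma_n$ and $J$ is the $n!\times n!$ matrix with zero diagonal and all off-diagonal entries equal to $1$. Consequently, if $\eta_1=D_n,\eta_2,\dots,\eta_{n!}$ is the adjacency spectrum of $\Gamma_n$ (with $\eta_1=D_n$ the eigenvalue of the all-ones eigenvector), then the distance spectrum of $\Gamma_n$ is \[\{2(n!-1)-\eta_1,\,-2-\eta_2,\,\dots,\,-2-\eta_{n!}\}.\] In representation-theoretic terms, $\gamma_{(n)}=2(n!-1)-D_n$ and $\gamma_\lambda=-2-\eta_\lambda$ for every partition $\lambda\vdash n$ with $\lambda\neq(n)$.
   Context: $\mathfrak{S}_n$ is the symmetric group, $D_n$ denotes both the set of derangements in $\mathfrak{S}_n$ and its cardinality. The derangement graph $\Gamma_n$ has vertex set $\mathfrak{S}_n$, with $w$ adjacent to $sw$ for $s\in D_n$; $d_{\Gamma_n}$ is its distance matrix. Irreducible characters of $\mathfrak{S}_n$ are indexed by partitions $\lambda\vdash n$, denoted $\chi_\lambda$, with $f_\lambda=\chi_\lambda(1)$; $(n)$ is the trivial character. Define $\eta_\lambda=\frac{1}{f_\lambda}\sum_{w\in D_n}\chi_\lambda(w)$ (the eigenvalue of $A_{\Gamma_n}$ on the $\lambda$-isotypic component, of multiplicity $f_\lambda^2$), and $\gamma_\lambda=\frac{1}{f_\lambda}\sum_{w\neq 1}\ell_D(w)\chi_\lambda(w)$, where $\ell_D(w)$ is the minimal number of derangements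 whose product is $w$. *)

theory Defs
  imports "HOL-Combinatorics.Permutations" "HOL-Library.FuncSet"
          "Jordan_Normal_Form.Char_Poly"
begin

(* S_n: permutations of {0..<n} (the paper's {1..n}, shifted) *)
definition Sym :: "nat \<Rightarrow> (nat \<Rightarrow> nat) set" where
  "Sym n = {p. p permutes {..<n}}"

definition Der :: "nat \<Rightarrow> (nat \<Rightarrow> nat) set" where
  "Der n = {p \<in> Sym n. \<forall>i<n. p i \<noteq> i}"

(* adjacency in Gamma_n: w ~ s w for s in D_n, i.e. v \<circ> Hilbert_Choice.inv w \<in> D_n *)
definition adj :: "nat \<Rightarrow> (nat \<Rightarrow> nat) \<Rightarrow> (nat \<Rightarrow> nat) \<Rightarrow> bool" where
  "adj n w v \<longleftrightarrow> w \<in> Sym n \<and> v \<in> Sym n \<and> v \<circ> Hilbert_Choice.inv w \<in> Der n"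

definition has_walk :: "nat \<Rightarrow> (nat \<Rightarrow> nat) \<Rightarrow> (nat \<Rightarrow> nat) \<Rightarrow> nat \<Rightarrow> bool" where
  "has_walk n u v k \<longleftrightarrow> (\<exists>xs. length xs = Suc k \<and> hd xs = u \<and> last xs = v \<and>
      (\<forall>i<k. adj n (xs ! i) (xs ! Suc i)))"

definition gdist :: "nat \<Rightarrow> (nat \<Rightarrow> nat) \<Rightarrow> (nat \<Rightarrow> nat) \<Rightarrow> nat" where
  "gdist n u v = (LEAST k. has_walk n u v k)"

definition lenD :: "nat \<Rightarrow> (nat \<Rightarrow> nat) \<Rightarrow> nat" where
  "lenD n w = (LEAST k. \<exists>ss. length ss = k \<and> set ss \<subseteq> Der n \<and> foldr (\<circ>) ss id = w)"

section \<open>Irreducible characters of S_n (Jacobi--Trudi / determinantal formula)\<close>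

definition is_partition :: "nat \<Rightarrow> nat list \<Rightarrow> bool" where
  "is_partition n lam \<longleftrightarrow> sorted (rev lam) \<and> (\<forall>x\<in>set lam. 0 < x) \<and> sum_list lam = n"

(* permutation character of the Young subgroup S_mu (mu a composition of n,
   possibly with zero parts); 0 if some part is negative *)
definition young_char :: "nat \<Rightarrow> int list \<Rightarrow> (nat \<Rightarrow> nat) \<Rightarrow> int" where
  "young_char n mu w = (if (\<exists>x\<in>set mu. x < 0) then 0 else
     int (card {f \<in> {..<n} \<rightarrow>\<^sub>E {..<length mu}.
                 (\<forall>i<length mu. int (card {j. j < n \<and> f j = i}) = mu ! i) \<and>
                 (\<forall>j<n. f (w j) = f j)}))"

definition chi :: "nat \<Rightarrow> nat list \<Rightarrow> (nat \<Rightarrow> nat) \<Rightarrow> int" where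
  "chi n lam w = (\<Sum>\<sigma> | \<sigma> permutes {..<length lam}.
      sign \<sigma> * young_char n (map (\<lambda>i. int (lam ! i) - int i + int (\<sigma> i)) [0..<length lam]) w)"

definition fdeg :: "nat \<Rightarrow> nat list \<Rightarrow> int" where
  "fdeg n lam = chi n lam id"

definition eta :: "nat \<Rightarrow> nat list \<Rightarrow> real" where
  "eta n lam = (\<Sum>w\<in>Der n. real_of_int (chi n lam w)) / real_of_int (fdeg n lam)"

definition gamma :: "nat \<Rightarrow> nat list \<Rightarrow> real" where
  "gamma n lam = (\<Sum>w\<in>Sym n - {id}. real (lenD n w) * real_of_int (chi n lam w)) / real_of_int (fdeg n lam)"

definition adj_mat :: "nat \<Rightarrow> (nat \<Rightarrow> nat \<Rightarrow> nat) \<Rightarrow> real mat" where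
  "adj_mat n e = mat (fact n) (fact n) (\<lambda>(i,j). if adj n (e i) (e j) then 1 else 0)"

definition dist_mat :: "nat \<Rightarrow> (nat \<Rightarrow> nat \<Rightarrow> nat) \<Rightarrow> real mat" where
  "dist_mat n e = mat (fact n) (fact n) (\<lambda>(i,j). real (gdist n (e i) (e j)))"

end

theory Submission
  imports Defs
begin


definition der4 :: "(nat \<Rightarrow> nat) list" where
 "der4 = [transpose 0 1 \<circ> transpose 2 3, transpose 0 2 \<circ> transpose 1 3, transpose 0 3 \<circ> transpose 1 2,
          transpose 0 1 \<circ> transpose 1 2 \<circ> transpose 2 3, transpose 0 1 \<circ> transpose 1 3 \<circ> transpose 3 2,
          transpose 0 2 \<circ> transpose 2 1 \<circ> transpose 1 3, transpose 0 2 \<circ> transpose 2 3 \<circ> transpose 3 1,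
          transpose 0 3 \<circ> transpose 3 1 \<circ> transpose 1 2, transpose 0 3 \<circ> transpose 3 2 \<circ> transpose 2 1]"

lemma der4_perm: "s \<in> set der4 \<Longrightarrow> s permutes {..<4}"
  unfolding der4_def by (auto intro!: permutes_compose permutes_swap_id)

lemma der4_der: "s \<in> set der4 \<Longrightarrow> i < 4 \<Longrightarrow> s i \<noteq> i"
  unfolding der4_def by (auto simp: less_Suc_eq numeral_eq_Suc transpose_def)

lemma base4_aux: "(a::nat) < 4 \<Longrightarrow> b < 4 \<Longrightarrow> c < 4 \<Longrightarrow> d < 4 \<Longrightarrow> distinct [a,b,c,d] \<Longrightarrow>
  \<exists>s\<in>set der4. s 0 \<noteq> a \<and> s 1 \<noteq> b \<and> s 2 \<noteq> c \<and> s 3 \<noteq> d"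
  unfolding der4_def by (auto simp: less_Suc_eq numeral_eq_Suc transpose_def)

lemma base4: assumes p: "p permutes {..<4::nat}"
  shows "\<exists>s. s permutes {..<4} \<and> (\<forall>i<4. s i \<noteq> i \<and> s i \<noteq> p i)"
proof -
  have lt: "\<And>i. i < 4 \<Longrightarrow> p i < 4" using p by (metis lessThan_iff permutes_in_image)
  have inj: "\<And>i j. p i = p j \<Longrightarrow> i = j" using p by (meson permutes_inj injD)
  have d: "distinct [p 0, p 1, p 2, p 3]" using inj by (auto dest: inj)
  obtain s where s: "s \<in> set der4" "s 0 \<noteq> p 0 \<and> s 1 \<noteq> p 1 \<and> s 2 \<noteq> p 2 \<and> s 3 \<noteq> p 3"
    using base4_aux[OF lt lt lt lt d] by auto
  have "\<forall>i<4. s i \<noteq> i \<and> s i \<noteq> p i"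
  proof (intro allI impI)
    fix i :: nat assume "i < 4"
    then have "i = 0 \<or> i = 1 \<or> i = 2 \<or> i = 3" by auto
    then show "s i \<noteq> i \<and> s i \<noteq> p i" using s der4_der[OF s(1) \<open>i<4\<close>] by auto
  qed
  then show ?thesis using der4_perm[OF s(1)] by blast
qed

lemma avoid: "(n::nat) \<ge> 4 \<Longrightarrow> p permutes {..<n} \<Longrightarrow> \<exists>s. s permutes {..<n} \<and> (\<forall>i<n. s i \<noteq> i \<and> s i \<noteq> p i)"
proof (induction n arbitrary: p rule: nat_induct_at_least)
  case base
  then show ?case using base4 by simp
next
  case (Suc n)
  have ins: "{..<Suc n} = insert n {..<n}" by auto
  define q where "q = transpose n (p n) \<circ> p"
  have q: "q permutes {..<n}" unfolding q_def using permutes_insert_lemma[of p n "{..<n}"] Suc.prems ins by simp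
  obtain s' where s': "s' permutes {..<n}" "\<And>i. i<n \<Longrightarrow> s' i \<noteq> i \<and> s' i \<noteq> q i"
    using Suc.IH[OF q] by blast
  have c2: "card {Hilbert_Choice.inv p n, Hilbert_Choice.inv s' (p n)} \<le> 2" by (simp add: card_insert_if)
  have "card {..<n} - card {Hilbert_Choice.inv p n, Hilbert_Choice.inv s' (p n)} \<le> card ({..<n} - {Hilbert_Choice.inv p n, Hilbert_Choice.inv s' (p n)})"
    by (rule diff_card_le_card_Diff) simp
  then have "card ({..<n} - {Hilbert_Choice.inv p n, Hilbert_Choice.inv s' (p n)}) \<ge> n - 2" using c2 by simp
  then have "{..<n} - {Hilbert_Choice.inv p n, Hilbert_Choice.inv s' (p n)} \<noteq> {}" using Suc.hyps by (intro notI) simp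
  then obtain j where j: "j < n" "j \<noteq> Hilbert_Choice.inv p n" "j \<noteq> Hilbert_Choice.inv s' (p n)" by auto
  have pj: "p j \<noteq> n" using j Suc.prems by (metis permutes_inverses(2))
  have sj: "s' j \<noteq> p n" using j s' by (metis permutes_inverses(2))
  have s'n: "s' j < n" using s'(1) j(1) by (metis lessThan_iff permutes_in_image)
  define s where "s = transpose n (s' j) \<circ> s'"
  have sp: "s permutes {..<Suc n}" unfolding s_def
    by (rule permutes_compose[OF permutes_subset[OF s'(1)]]) (insert s'n, auto intro!: permutes_swap_id)
  have "\<forall>i<Suc n. s i \<noteq> i \<and> s i \<noteq> p i"
  proof (intro allI impI)
    fix i assume i: "i < Suc n"
    show "s i \<noteq> i \<and> s i \<noteq> p i"
    proof (cases "i = n")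
      case True
      have "s' n = n" using s'(1) by (simp add: permutes_not_in)
      then have "s i = s' j" using True by (simp add: s_def)
      then show ?thesis using True s'n sj by auto
    next
      case False
      then have il: "i < n" using i by auto
      show ?thesis
      proof (cases "i = j")
        case True
        then show ?thesis using pj j by (simp add: s_def)
      next
        case False
        have "s' i \<noteq> s' j" using False s'(1) by (metis permutes_inj injD)
        moreover have "s' i \<noteq> n" using s'(1) il by (metis lessThan_iff permutes_in_image less_irrefl)
        ultimately have si: "s i = s' i" by (simp add: s_def transpose_def)
        have "s' i \<noteq> p i"
        proof (cases "p i = n")
          case True then show ?thesis using \<open>s' i \<noteq> n\<close> by simp
        next
          case False
          have "p i \<noteq> p n" using \<open>i \<noteq> n\<close> Suc.prems by (metis permutes_inj injD)
          then have "q i = p i" using False by (simp add: q_def transpose_def)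
          then show ?thesis using s'(2)[OF il] by simp
        qed
        then show ?thesis using si s'(2)[OF il] by simp
      qed
    qed
  qed
  then show ?case using sp by blast
qed

lemma two_der: assumes "n \<ge> 4" "p \<in> Sym n"
  shows "\<exists>t1 t2. t1 \<in> Der n \<and> t2 \<in> Der n \<and> p = t2 \<circ> t1"
proof -
  have p: "p permutes {..<n}" using assms by (simp add: Sym_def)
  obtain s where s: "s permutes {..<n}" "\<And>i. i<n \<Longrightarrow> s i \<noteq> i \<and> s i \<noteq> p i" using avoid[OF assms(1) p] by blast
  define t2 where "t2 = p \<circ> Hilbert_Choice.inv s"
  have t2p: "t2 permutes {..<n}" unfolding t2_def by (intro permutes_compose permutes_inv s p)
  have "\<forall>i<n. t2 i \<noteq> i"
  proof (intro allI impI)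
    fix i assume i: "i < n"
    define k where "k = Hilbert_Choice.inv s i"
    have k: "k < n" "s k = i" using i s(1) by (auto simp: k_def permutes_inverses) (metis lessThan_iff permutes_in_image permutes_inv)
    show "t2 i \<noteq> i" using s(2)[OF k(1)] k by (simp add: t2_def k_def[symmetric])
  qed
  moreover have "p = t2 \<circ> s" unfolding t2_def using s(1) by (simp add: comp_assoc permutes_inv_o)
  ultimately show ?thesis using s t2p unfolding Der_def Sym_def by blast
qed


lemma id_not_Der: "n \<ge> 1 \<Longrightarrow> id \<notin> Der n"
  unfolding Der_def by (auto intro!: exI[of _ 0])

lemma comp_inv_self: "w \<in> Sym n \<Longrightarrow> w \<circ> Hilbert_Choice.inv w = id"
  unfolding Sym_def by (simp add: permutes_inv_o)

lemma not_adj_self: "n \<ge> 1 \<Longrightarrow> \<not> adj n w w"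
  unfolding adj_def using comp_inv_self id_not_Der by metis

lemma walk0: "has_walk n w v 0 \<longleftrightarrow> w = v"
proof
  assume "has_walk n w v 0"
  then obtain xs where "length xs = 1" "hd xs = w" "last xs = v" unfolding has_walk_def by auto
  then show "w = v" by (cases xs) auto
next
  assume "w = v" then show "has_walk n w v 0" unfolding has_walk_def by (intro exI[of _ "[w]"]) auto
qed

lemma walk1: "has_walk n w v 1 \<longleftrightarrow> adj n w v"
proof
  assume "has_walk n w v 1"
  then obtain xs where xs: "length xs = 2" "hd xs = w" "last xs = v" "\<forall>i<1. adj n (xs!i) (xs!Suc i)" unfolding has_walk_def one_add_one[symmetric] by auto
  then obtain a b where "xs = [a,b]" by (metis length_0_conv length_Suc_conv numeral_2_eq_2)
  then show "adj n w v" using xs by auto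
next
  assume "adj n w v" then show "has_walk n w v 1" unfolding has_walk_def by (intro exI[of _ "[w,v]"]) auto
qed

lemma walk2: "adj n w u \<Longrightarrow> adj n u v \<Longrightarrow> has_walk n w v 2"
  unfolding has_walk_def
  by (intro exI[of _ "[w,u,v]"]) (auto simp: less_Suc_eq numeral_2_eq_2)

lemma exists_mid: assumes n: "n \<ge> 4" and w: "w \<in> Sym n" and v: "v \<in> Sym n"
  shows "\<exists>u. adj n w u \<and> adj n u v"
proof -
  have wp: "w permutes {..<n}" and vp: "v permutes {..<n}" using w v by (auto simp: Sym_def)
  have "v \<circ> Hilbert_Choice.inv w \<in> Sym n" unfolding Sym_def using wp vp by (auto intro: permutes_compose permutes_inv)
  then obtain t1 t2 where t: "t1 \<in> Der n" "t2 \<in> Der n" "v \<circ> Hilbert_Choice.inv w = t2 \<circ> t1"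
    using two_der[OF n] by blast
  have t1p: "t1 permutes {..<n}" using t(1) by (simp add: Der_def Sym_def)
  define u where "u = t1 \<circ> w"
  have up: "u permutes {..<n}" unfolding u_def using wp t1p by (rule permutes_compose)
  have "u \<circ> Hilbert_Choice.inv w = t1" unfolding u_def using wp by (simp add: comp_assoc permutes_inv_o)
  then have a1: "adj n w u" unfolding adj_def using w up t(1) by (simp add: Sym_def)
  have iu: "Hilbert_Choice.inv u = Hilbert_Choice.inv w \<circ> Hilbert_Choice.inv t1"
    unfolding u_def by (rule o_inv_distrib) (use t1p wp in \<open>auto simp: permutes_bij\<close>)
  have "v \<circ> Hilbert_Choice.inv u = (v \<circ> Hilbert_Choice.inv w) \<circ> Hilbert_Choice.inv t1" by (simp add: iu comp_assoc)
  also have "\<dots> = t2" using t(3) t1p by (simp add: comp_assoc permutes_inv_o)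
  finally have "adj n u v" unfolding adj_def using v up t(2) by (simp add: Sym_def)
  with a1 show ?thesis by blast
qed

lemma gdist_val: assumes n: "n \<ge> 4" and w: "w \<in> Sym n" and v: "v \<in> Sym n"
  shows "int (gdist n w v) = 2 * (if w \<noteq> v then 1 else 0) - (if adj n w v then 1 else 0)"
proof (cases "w = v")
  case True
  then have "gdist n w v = 0" unfolding gdist_def by (simp add: walk0)
  then show ?thesis using True not_adj_self[of n w] n by simp
next
  case False
  show ?thesis
  proof (cases "adj n w v")
    case True
    have "gdist n w v = 1" unfolding gdist_def
    proof (rule Least_equality)
      show "has_walk n w v 1" using True walk1 by simp
      fix y assume "has_walk n w v y" then show "1 \<le> y" using False walk0 by (cases y) auto
    qed
    then show ?thesis using True False by simp
  next
    case na: False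
    obtain u where "adj n w u" "adj n u v" using exists_mid[OF n w v] by blast
    have "gdist n w v = 2" unfolding gdist_def
    proof (rule Least_equality)
      show "has_walk n w v 2" using walk2 \<open>adj n w u\<close> \<open>adj n u v\<close> .
      fix y assume "has_walk n w v y" then show "2 \<le> y" using False na walk0 walk1
        by (metis One_nat_def Suc_1 less_2_cases not_le)
    qed
    then show ?thesis using na False by simp
  qed
qed

lemma lenD_der: assumes "n \<ge> 1" "w \<in> Der n" shows "lenD n w = 1"
  unfolding lenD_def
proof (rule Least_equality)
  show "\<exists>ss. length ss = 1 \<and> set ss \<subseteq> Der n \<and> foldr (\<circ>) ss id = w"
    using assms by (intro exI[of _ "[w]"]) auto
  fix y assume "\<exists>ss. length ss = y \<and> set ss \<subseteq> Der n \<and> foldr (\<circ>) ss id = w"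
  then show "1 \<le> y" using assms id_not_Der by (cases y) auto
qed

lemma lenD_two: assumes n: "n \<ge> 4" and w: "w \<in> Sym n" "w \<notin> Der n" "w \<noteq> id" shows "lenD n w = 2"
  unfolding lenD_def
proof (rule Least_equality)
  obtain t1 t2 where t: "t1 \<in> Der n" "t2 \<in> Der n" "w = t2 \<circ> t1" using two_der[OF n w(1)] by blast
  show "\<exists>ss. length ss = 2 \<and> set ss \<subseteq> Der n \<and> foldr (\<circ>) ss id = w"
    using t by (intro exI[of _ "[t2,t1]"]) auto
  fix y assume "\<exists>ss. length ss = y \<and> set ss \<subseteq> Der n \<and> foldr (\<circ>) ss id = w"
  then obtain ss where ss: "length ss = y" "set ss \<subseteq> Der n" "foldr (\<circ>) ss id = w" by blast
  show "2 \<le> y"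
  proof (rule ccontr)
    assume "\<not> 2 \<le> y"
    then have "y = 0 \<or> y = 1" by auto
    then show False
    proof
      assume "y = 0" then show False using ss w by auto
    next
      assume "y = 1" then obtain a where "ss = [a]" using ss(1) by (cases ss) auto
      then show False using ss w by auto
    qed
  qed
qed


definition Tset :: "nat \<Rightarrow> int list \<Rightarrow> (nat \<Rightarrow> nat) set" where
 "Tset n mu = {f \<in> {..<n} \<rightarrow>\<^sub>E {..<length mu}. \<forall>i<length mu. int (card {j. j < n \<and> f j = i}) = mu ! i}"

lemma finite_Tset[simp]: "finite (Tset n mu)"
  by (rule finite_subset[of _ "{..<n} \<rightarrow>\<^sub>E {..<length mu}"]) (auto simp: Tset_def intro!: finite_PiE)

lemma Tset_neg: assumes "i < length mu" "mu ! i < 0" shows "Tset n mu = {}"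
proof -
  have "False" if f: "f \<in> Tset n mu" for f
  proof -
    have "int (card {j. j < n \<and> f j = i}) = mu ! i" using f assms(1) by (auto simp: Tset_def)
    then show False using assms(2) by linarith
  qed
  then show ?thesis by blast
qed

lemma yc_eq: "young_char n mu w = int (card {f \<in> Tset n mu. \<forall>j<n. f (w j) = f j})"
proof (cases "\<exists>x\<in>set mu. x < 0")
  case True
  then obtain i where "i < length mu" "mu ! i < 0" by (auto simp: in_set_conv_nth)
  then show ?thesis using Tset_neg True by (simp add: young_char_def)
next
  case False
  then show ?thesis unfolding young_char_def Tset_def by (simp add: conj_assoc)
qed

lemma yc_id: "young_char n mu id = int (card (Tset n mu))"
  by (simp add: yc_eq)

lemma card_fiber_Suc: "card {j. j < Suc n \<and> f j = i} = card {j. j < n \<and> f j = i} + (if f n = i then 1 else 0)"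
proof -
  have "{j. j < Suc n \<and> f j = i} = {j. j < n \<and> f j = i} \<union> (if f n = i then {n} else {})"
    by (auto simp: less_Suc_eq)
  then show ?thesis by (auto simp: card_insert_if)
qed

lemma Tset_fiber_bij:
  assumes k: "k < length mu"
  shows "bij_betw (\<lambda>f. restrict f {..<n}) {f \<in> Tset (Suc n) mu. f n = k} (Tset n (mu[k := mu ! k - 1]))"
proof (rule bij_betw_byWitness[where f' = "\<lambda>g. g(n := k)"])
  show "\<forall>a\<in>{f \<in> Tset (Suc n) mu. f n = k}. (restrict a {..<n})(n := k) = a"
    by (auto simp: Tset_def fun_eq_iff PiE_def extensional_def less_Suc_eq)
  show "\<forall>a'\<in>Tset n (mu[k := mu ! k - 1]). restrict (a'(n := k)) {..<n} = a'"
    by (auto simp: Tset_def fun_eq_iff PiE_def extensional_def)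
  have cs: "\<And>f i. {j. j < n \<and> restrict f {..<n} j = i} = {j. j < n \<and> f j = i}" by auto
  have cs2: "\<And>g i. {j. j < n \<and> (g(n:=k)) j = i} = {j. j < n \<and> g j = i}" by auto
  show "(\<lambda>f. restrict f {..<n}) ` {f \<in> Tset (Suc n) mu. f n = k} \<subseteq> Tset n (mu[k := mu ! k - 1])"
  proof
    fix h assume "h \<in> (\<lambda>f. restrict f {..<n}) ` {f \<in> Tset (Suc n) mu. f n = k}"
    then obtain f where f: "f \<in> Tset (Suc n) mu" "f n = k" and h: "h = restrict f {..<n}" by auto
    show "h \<in> Tset n (mu[k := mu ! k - 1])" unfolding h
      unfolding Tset_def mem_Collect_eq
    proof (intro conjI allI impI)
      show "restrict f {..<n} \<in> {..<n} \<rightarrow>\<^sub>E {..<length (mu[k := mu ! k - 1])}" using f by (auto simp: Tset_def)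
      fix i assume i: "i < length (mu[k := mu ! k - 1])"
      have "int (card {j. j < Suc n \<and> f j = i}) = mu ! i" using f i by (auto simp: Tset_def)
      then show "int (card {j. j < n \<and> restrict f {..<n} j = i}) = mu[k := mu ! k - 1] ! i"
        unfolding cs card_fiber_Suc using f i k by (auto simp: nth_list_update)
    qed
  qed
  show "(\<lambda>g. g(n := k)) ` Tset n (mu[k := mu ! k - 1]) \<subseteq> {f \<in> Tset (Suc n) mu. f n = k}"
  proof
    fix h assume "h \<in> (\<lambda>g. g(n := k)) ` Tset n (mu[k := mu ! k - 1])"
    then obtain g where g: "g \<in> Tset n (mu[k := mu ! k - 1])" and h: "h = g(n := k)" by auto
    have "g(n := k) \<in> Tset (Suc n) mu"
      unfolding Tset_def mem_Collect_eq
    proof (intro conjI allI impI)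
      show "g(n := k) \<in> {..<Suc n} \<rightarrow>\<^sub>E {..<length mu}" using g k by (auto simp: Tset_def PiE_def Pi_def extensional_def)
      fix i assume i: "i < length mu"
      have "int (card {j. j < n \<and> g j = i}) = mu[k := mu ! k - 1] ! i" using g i by (auto simp: Tset_def)
      then show "int (card {j. j < Suc n \<and> (g(n := k)) j = i}) = mu ! i"
        unfolding card_fiber_Suc cs2 using i k by (auto simp: nth_list_update split: if_splits)
    qed
    then show "h \<in> {f \<in> Tset (Suc n) mu. f n = k}" unfolding h by simp
  qed
qed

lemma card_Tset_Suc: "card (Tset (Suc n) mu) = (\<Sum>k<length mu. card (Tset n (mu[k := mu ! k - 1])))"
proof -
  have "Tset (Suc n) mu = (\<Union>k\<in>{..<length mu}. {f \<in> Tset (Suc n) mu. f n = k})"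
    by (auto simp: Tset_def PiE_def Pi_def)
  moreover have "card (\<Union>k\<in>{..<length mu}. {f \<in> Tset (Suc n) mu. f n = k}) = (\<Sum>k<length mu. card {f \<in> Tset (Suc n) mu. f n = k})"
    by (rule card_UN_disjoint) auto
  ultimately have "card (Tset (Suc n) mu) = (\<Sum>k<length mu. card {f \<in> Tset (Suc n) mu. f n = k})"
    by simp
  also have "\<dots> = (\<Sum>k<length mu. card (Tset n (mu[k := mu ! k - 1])))"
    by (rule sum.cong[OF refl], rule bij_betw_same_card, rule Tset_fiber_bij) auto
  finally show ?thesis .
qed

lemma Tset_swap:
  assumes a: "a < length mu" and b: "b < length mu"
  shows "card (Tset n (map (\<lambda>i. mu ! transpose a b i) [0..<length mu])) = card (Tset n mu)"
proof -
  let ?t = "transpose a b"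
  let ?m = "map (\<lambda>i. mu ! ?t i) [0..<length mu]"
  have tl: "\<And>i. i < length mu \<Longrightarrow> ?t i < length mu" using a b by (auto simp: transpose_def)
  have fib: "\<And>f i. {j. j < n \<and> restrict (?t \<circ> f) {..<n} j = i} = {j. j < n \<and> f j = ?t i}"
  proof -
    have tq: "\<And>x i. ?t x = i \<longleftrightarrow> x = ?t i" by (metis transpose_involutory)
    show "\<And>f i. {j. j < n \<and> restrict (?t \<circ> f) {..<n} j = i} = {j. j < n \<and> f j = ?t i}" by (auto simp: tq)
  qed
  have "bij_betw (\<lambda>f. restrict (?t \<circ> f) {..<n}) (Tset n mu) (Tset n ?m)"
  proof (rule bij_betw_byWitness[where f' = "\<lambda>f. restrict (?t \<circ> f) {..<n}"])
    show "\<forall>f\<in>Tset n mu. restrict (?t \<circ> restrict (?t \<circ> f) {..<n}) {..<n} = f"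
      by (auto simp: Tset_def fun_eq_iff PiE_def extensional_def)
    show "\<forall>f\<in>Tset n ?m. restrict (?t \<circ> restrict (?t \<circ> f) {..<n}) {..<n} = f"
      by (auto simp: Tset_def fun_eq_iff PiE_def extensional_def)
    have img: "restrict (?t \<circ> f) {..<n} \<in> Tset n (map (\<lambda>i. m ! ?t i) [0..<length m])"
      if f: "f \<in> Tset n m" and lm: "length m = length mu" for f m
      unfolding Tset_def mem_Collect_eq
    proof (intro conjI allI impI)
      show "restrict (?t \<circ> f) {..<n} \<in> {..<n} \<rightarrow>\<^sub>E {..<length (map (\<lambda>i. m ! ?t i) [0..<length m])}"
        using f tl lm by (auto simp: Tset_def PiE_def Pi_def)
      fix i assume i: "i < length (map (\<lambda>i. m ! ?t i) [0..<length m])"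
      then have "?t i < length m" using tl lm by simp
      then have "int (card {j. j < n \<and> f j = ?t i}) = m ! ?t i" using f by (auto simp: Tset_def)
      then show "int (card {j. j < n \<and> restrict (?t \<circ> f) {..<n} j = i}) = map (\<lambda>i. m ! ?t i) [0..<length m] ! i"
        unfolding fib using i by simp
    qed
    show "(\<lambda>f. restrict (?t \<circ> f) {..<n}) ` Tset n mu \<subseteq> Tset n ?m"
      using img[of _ mu] by auto
    have mm: "map (\<lambda>i. ?m ! ?t i) [0..<length ?m] = mu"
      by (rule nth_equalityI) (auto simp: tl)
    show "(\<lambda>f. restrict (?t \<circ> f) {..<n}) ` Tset n ?m \<subseteq> Tset n mu"
      using img[of _ ?m] mm by auto
  qed
  then show ?thesis by (simp add: bij_betw_same_card)
qed

lemma Tset_snoc0: "Tset n (mu @ [0]) = Tset n mu"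
proof safe
  fix f assume f: "f \<in> Tset n (mu @ [0])"
  have "card {j. j < n \<and> f j = length mu} = 0" using f by (auto simp: Tset_def)
  then have "\<forall>j<n. f j \<noteq> length mu" by auto
  then show "f \<in> Tset n mu" using f by (auto simp: Tset_def PiE_def Pi_def nth_append less_Suc_eq)
next
  fix f assume f: "f \<in> Tset n mu"
  then have "{j. j < n \<and> f j = length mu} = {}" by (auto simp: Tset_def PiE_def Pi_def)
  then show "f \<in> Tset n (mu @ [0])" using f by (auto simp: Tset_def PiE_def Pi_def nth_append less_Suc_eq)
qed


definition muS :: "int list \<Rightarrow> (nat \<Rightarrow> nat) \<Rightarrow> int list" where
  "muS a \<sigma> = map (\<lambda>i. a ! i - int i + int (\<sigma> i)) [0..<length a]"

definition Fn :: "nat \<Rightarrow> int list \<Rightarrow> int" where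
  "Fn n a = (\<Sum>\<sigma> | \<sigma> permutes {..<length a}. sign \<sigma> * int (card (Tset n (muS a \<sigma>))))"

lemma length_muS[simp]: "length (muS a \<sigma>) = length a" by (simp add: muS_def)
lemma nth_muS[simp]: "i < length a \<Longrightarrow> muS a \<sigma> ! i = a ! i - int i + int (\<sigma> i)" by (simp add: muS_def)

lemma fdeg_Fn: "fdeg n lam = Fn n (map int lam)"
  unfolding fdeg_def chi_def Fn_def yc_id muS_def length_map
proof (rule sum.cong[OF refl])
  fix x
  have "map (\<lambda>i. int (lam ! i) - int i + int (x i)) [0..<length lam] =
        map (\<lambda>i. map int lam ! i - int i + int (x i)) [0..<length lam]"
    by (rule nth_equalityI) auto
  then show "sign x * int (card (Tset n (map (\<lambda>i. int (lam ! i) - int i + int (x i)) [0..<length lam]))) =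
        sign x * int (card (Tset n (map (\<lambda>i. map int lam ! i - int i + int (x i)) [0..<length lam])))"
    by (rule arg_cong[where f="\<lambda>m. sign x * int (card (Tset n m))"])
qed

lemma sum_sign_zero:
  fixes g :: "(nat \<Rightarrow> nat) \<Rightarrow> int"
  assumes S: "finite S" and ab: "a \<in> S" "b \<in> S" "a \<noteq> b"
    and g: "\<And>\<sigma>. \<sigma> permutes S \<Longrightarrow> g (\<sigma> \<circ> transpose a b) = g \<sigma>"
  shows "(\<Sum>\<sigma> | \<sigma> permutes S. sign \<sigma> * g \<sigma>) = 0"
proof -
  let ?t = "transpose a b"
  have tp: "?t permutes S" by (rule permutes_swap_id[OF ab(1,2)])
  have "(\<Sum>\<sigma> | \<sigma> permutes S. sign \<sigma> * g \<sigma>) = (\<Sum>\<sigma> | \<sigma> permutes S. sign (\<sigma> \<circ> ?t) * g (\<sigma> \<circ> ?t))"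
    by (rule sum_permutations_compose_right[OF tp])
  also have "\<dots> = (\<Sum>\<sigma> | \<sigma> permutes S. - (sign \<sigma> * g \<sigma>))"
  proof (rule sum.cong[OF refl])
    fix \<sigma> assume "\<sigma> \<in> {\<sigma>. \<sigma> permutes S}"
    then have sp: "\<sigma> permutes S" by simp
    have "sign (\<sigma> \<circ> ?t) = sign \<sigma> * sign ?t"
      by (rule sign_compose) (use sp tp S in \<open>auto simp: permutation_permutes\<close>)
    then show "sign (\<sigma> \<circ> ?t) * g (\<sigma> \<circ> ?t) = - (sign \<sigma> * g \<sigma>)"
      using g[OF sp] ab by (simp add: sign_swap_id)
  qed
  also have "\<dots> = - (\<Sum>\<sigma> | \<sigma> permutes S. sign \<sigma> * g \<sigma>)" by (simp add: sum_negf)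
  finally show ?thesis by simp
qed

lemma muS_update: "k < length a \<Longrightarrow> (muS a \<sigma>)[k := muS a \<sigma> ! k - 1] = muS (a[k := a ! k - 1]) \<sigma>"
  by (rule nth_equalityI) (auto simp: nth_list_update)

lemma muS_update': "k < length a \<Longrightarrow> (muS a \<sigma>)[k := a ! k - int k + int (\<sigma> k) - 1] = muS (a[k := a ! k - 1]) \<sigma>"
  using muS_update[of k a \<sigma>] by simp

lemma Fn_Suc: "Fn (Suc n) a = (\<Sum>k<length a. Fn n (a[k := a ! k - 1]))"
proof -
  have "Fn (Suc n) a = (\<Sum>\<sigma> | \<sigma> permutes {..<length a}. \<Sum>k<length a. sign \<sigma> * int (card (Tset n (muS (a[k := a ! k - 1]) \<sigma>))))"
    unfolding Fn_def card_Tset_Suc by (simp add: sum_distrib_left muS_update')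
  also have "\<dots> = (\<Sum>k<length a. Fn n (a[k := a ! k - 1]))"
    unfolding Fn_def by (subst sum.swap) simp
  finally show ?thesis .
qed

lemma Fn_eqrows:
  assumes k: "Suc k < length a" and eq: "a ! k - int k = a ! Suc k - int (Suc k)"
  shows "Fn n a = 0"
  unfolding Fn_def
proof (rule sum_sign_zero[where a = k and b = "Suc k"])
  fix \<sigma> :: "nat \<Rightarrow> nat" assume sp: "\<sigma> permutes {..<length a}"
  let ?t = "transpose k (Suc k)"
  have "muS a (\<sigma> \<circ> ?t) = map (\<lambda>i. muS a \<sigma> ! ?t i) [0..<length (muS a \<sigma>)]"
  proof (rule nth_equalityI)
    fix i assume i: "i < length (muS a (\<sigma> \<circ> ?t))"
    have til: "?t i < length a" using i k by (auto simp: transpose_def)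
    have "a ! i - int i = a ! ?t i - int (?t i)" using eq by (auto simp: transpose_def)
    then show "muS a (\<sigma> \<circ> ?t) ! i = map (\<lambda>i. muS a \<sigma> ! ?t i) [0..<length (muS a \<sigma>)] ! i"
      using i til by simp
  qed simp
  then show "int (card (Tset n (muS a (\<sigma> \<circ> ?t)))) = int (card (Tset n (muS a \<sigma>)))"
    using Tset_swap[of k "muS a \<sigma>" "Suc k" n] k by simp
qed (use k in auto)

lemma perm_Suc_fix: "{\<sigma>. \<sigma> permutes {..<Suc l} \<and> \<sigma> l = l} = {\<sigma>. \<sigma> permutes {..<l}}"
proof safe
  fix \<sigma> assume "\<sigma> permutes {..<Suc l}" "\<sigma> l = l"
  then show "\<sigma> permutes {..<l}" using permutes_superset[of \<sigma> "{..<Suc l}" "{..<l}"] by (auto simp: less_Suc_eq)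
next
  fix \<sigma> assume "\<sigma> permutes {..<l}"
  then show "\<sigma> permutes {..<Suc l}" by (rule permutes_subset) auto
  show "\<sigma> l = l" using \<open>\<sigma> permutes {..<l}\<close> by (simp add: permutes_not_in)
qed

lemma Fn_snoc0: "Fn n (a @ [0]) = Fn n a"
proof -
  let ?l = "length a"
  let ?g = "\<lambda>\<sigma>. sign \<sigma> * int (card (Tset n (muS (a @ [0]) \<sigma>)))"
  have "Fn n (a @ [0]) = (\<Sum>\<sigma> | \<sigma> permutes {..<Suc ?l}. ?g \<sigma>)" unfolding Fn_def by simp
  also have "\<dots> = (\<Sum>\<sigma> \<in> {\<sigma>. \<sigma> permutes {..<Suc ?l} \<and> \<sigma> ?l = ?l}. ?g \<sigma>)"
  proof (rule sum.mono_neutral_right)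
    show "finite {\<sigma>. \<sigma> permutes {..<Suc ?l}}" by (rule finite_permutations) simp
    show "{\<sigma>. \<sigma> permutes {..<Suc ?l} \<and> \<sigma> ?l = ?l} \<subseteq> {\<sigma>. \<sigma> permutes {..<Suc ?l}}" by auto
    show "\<forall>\<sigma>\<in>{\<sigma>. \<sigma> permutes {..<Suc ?l}} - {\<sigma>. \<sigma> permutes {..<Suc ?l} \<and> \<sigma> ?l = ?l}. ?g \<sigma> = 0"
    proof
      fix \<sigma> assume "\<sigma> \<in> {\<sigma>. \<sigma> permutes {..<Suc ?l}} - {\<sigma>. \<sigma> permutes {..<Suc ?l} \<and> \<sigma> ?l = ?l}"
      then have sp: "\<sigma> permutes {..<Suc ?l}" and ne: "\<sigma> ?l \<noteq> ?l" by auto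
      have "\<sigma> ?l < Suc ?l" using sp by (metis lessThan_iff lessI permutes_in_image)
      then have "\<sigma> ?l < ?l" using ne by simp
      then have "muS (a @ [0]) \<sigma> ! ?l < 0" by (simp add: nth_append)
      then have "Tset n (muS (a @ [0]) \<sigma>) = {}" by (intro Tset_neg[of ?l]) auto
      then show "?g \<sigma> = 0" by simp
    qed
  qed
  also have "\<dots> = (\<Sum>\<sigma> | \<sigma> permutes {..<?l}. sign \<sigma> * int (card (Tset n (muS a \<sigma>))))"
    unfolding perm_Suc_fix
  proof (rule sum.cong[OF refl])
    fix \<sigma> assume "\<sigma> \<in> {\<sigma>. \<sigma> permutes {..<?l}}"
    then have "\<sigma> ?l = ?l" by (simp add: permutes_not_in)
    then have "muS (a @ [0]) \<sigma> = muS a \<sigma> @ [0]"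
      by (intro nth_equalityI) (auto simp: nth_append less_Suc_eq)
    then show "?g \<sigma> = sign \<sigma> * int (card (Tset n (muS a \<sigma>)))" by (simp add: Tset_snoc0)
  qed
  finally show ?thesis unfolding Fn_def .
qed


definition part :: "nat \<Rightarrow> nat list \<Rightarrow> bool" where
  "part n lam \<longleftrightarrow> (\<forall>i j. i \<le> j \<longrightarrow> j < length lam \<longrightarrow> lam ! j \<le> lam ! i) \<and> (\<forall>i<length lam. 0 < lam ! i) \<and> sum_list lam = n"

lemma part_of: "is_partition n lam \<Longrightarrow> part n lam"
  unfolding is_partition_def part_def by (auto intro: sorted_rev_nth_mono)

lemma Fn_0: "Fn 0 [] = 1"
  unfolding Fn_def by (simp add: Tset_def muS_def)

lemma part_dec:
  assumes p: "part (Suc n) lam" and k: "k < length lam" and two: "lam ! k \<ge> 2"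
    and lt: "Suc k < length lam \<Longrightarrow> lam ! Suc k < lam ! k"
  shows "part n (lam[k := lam ! k - 1])"
  unfolding part_def
proof (intro conjI allI impI)
  have mono: "\<And>i j. i \<le> j \<Longrightarrow> j < length lam \<Longrightarrow> lam ! j \<le> lam ! i" using p by (auto simp: part_def)
  fix i j assume ij: "i \<le> j" "j < length (lam[k := lam ! k - 1])"
  show "lam[k := lam ! k - 1] ! j \<le> lam[k := lam ! k - 1] ! i"
  proof (cases "i = k")
    case True
    show ?thesis
    proof (cases "j = k")
      case False
      then have "Suc k \<le> j" using ij True by auto
      then have "lam ! j \<le> lam ! Suc k" using mono ij by simp
      then show ?thesis using True False lt ij by (auto simp: nth_list_update)
    qed (use True in simp)
  next
    case False
    then show ?thesis using mono[of i j] mono[of i k] ij k by (auto simp: nth_list_update)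
  qed
next
  fix i assume "i < length (lam[k := lam ! k - 1])"
  then show "0 < lam[k := lam ! k - 1] ! i" using p two by (cases "i = k") (auto simp: part_def nth_list_update)
next
  show "sum_list (lam[k := lam ! k - 1]) = n" using p k two by (simp add: part_def sum_list_update)
qed

lemma map_int_dec: "k < length lam \<Longrightarrow> lam ! k \<ge> 1 \<Longrightarrow>
   (map int lam)[k := map int lam ! k - 1] = map int (lam[k := lam ! k - 1])"
  by (simp add: map_update of_nat_diff)

lemma Fn_pos: "part n lam \<Longrightarrow> Fn n (map int lam) > 0"
proof (induction n arbitrary: lam)
  case 0
  then have "lam = []" by (cases lam) (auto simp: part_def)
  then show ?case by (simp add: Fn_0)
next
  case (Suc n)
  have p: "part (Suc n) lam" by fact
  have mono: "\<And>i j. i \<le> j \<Longrightarrow> j < length lam \<Longrightarrow> lam ! j \<le> lam ! i" using p by (auto simp: part_def)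
  have posv: "\<And>i. i < length lam \<Longrightarrow> lam ! i \<ge> 1" using p by (auto simp: part_def Suc_le_eq)
  have "lam \<noteq> []" using p by (auto simp: part_def)
  then obtain m where l: "length lam = Suc m" by (cases lam) auto
  let ?a = "map int lam"
  let ?t = "\<lambda>k. Fn n (?a[k := ?a ! k - 1])"
  have dec_pos: "?t k > 0" if k: "k < length lam" "lam ! k \<ge> 2" "Suc k < length lam \<Longrightarrow> lam ! Suc k < lam ! k" for k
  proof -
    have "part n (lam[k := lam ! k - 1])" using part_dec[OF p k(1) k(2)] k(3) by blast
    then have "Fn n (map int (lam[k := lam ! k - 1])) > 0" by (rule Suc.IH)
    then show ?thesis using map_int_dec[OF k(1)] k(2) by simp
  qed
  have nonneg: "?t k \<ge> 0" if k: "k < m" for k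
  proof (cases "lam ! Suc k < lam ! k")
    case True
    have "lam ! Suc k \<ge> 1" using posv k l by simp
    then show ?thesis using dec_pos[of k] True k l by simp
  next
    case False
    then have eq: "lam ! Suc k = lam ! k" using mono[of k "Suc k"] k l by simp
    show ?thesis
    proof -
      have "?t k = 0"
      proof (rule Fn_eqrows)
        show "Suc k < length (?a[k := ?a ! k - 1])" using k l by simp
        show "?a[k := ?a ! k - 1] ! k - int k = ?a[k := ?a ! k - 1] ! Suc k - int (Suc k)"
          using k l eq by (simp add: nth_list_update)
      qed
      then show ?thesis by simp
    qed
  qed
  have last_pos: "?t m > 0"
  proof (cases "lam ! m \<ge> 2")
    case True
    then show ?thesis using dec_pos[of m] l by simp
  next
    case False
    then have one: "lam ! m = 1" using posv[of m] l by simp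
    define b where "b = butlast lam"
    have lb: "lam = b @ [1]" unfolding b_def using one l \<open>lam \<noteq> []\<close>
      by (metis append_butlast_last_id diff_Suc_1 last_conv_nth)
    have lenb: "length b = m" using l lb by simp
    have "?a[m := ?a ! m - 1] = map int b @ [0]" using lb lenb
      by (simp add: list_update_append nth_append)
    then have "?t m = Fn n (map int b)" by (simp add: Fn_snoc0)
    moreover have "part n b"
      unfolding part_def
    proof (intro conjI allI impI)
      fix i j assume "i \<le> j" "j < length b"
      then show "b ! j \<le> b ! i" using mono[of i j] lb by (auto simp: nth_append)
    next
      fix i assume "i < length b"
      then show "0 < b ! i" using posv[of i] lb by (auto simp: nth_append)
    next
      show "sum_list b = n" using p lb by (simp add: part_def)
    qed
    ultimately show ?thesis using Suc.IH by simp
  qed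
  have "Fn (Suc n) ?a = (\<Sum>k<Suc m. ?t k)" using Fn_Suc[of n ?a] l by simp
  also have "\<dots> = (\<Sum>k<m. ?t k) + ?t m" by simp
  also have "\<dots> > 0" using last_pos nonneg by (smt (verit) lessThan_iff sum_nonneg)
  finally show ?case .
qed

lemma fdeg_pos: "is_partition n lam \<Longrightarrow> fdeg n lam > 0"
  using Fn_pos part_of fdeg_Fn by simp


lemma sum_list_update_int: "k < length xs \<Longrightarrow> sum_list (xs[k := (x::int)]) = sum_list xs - xs ! k + x"
proof (induction xs arbitrary: k)
  case (Cons y ys) then show ?case by (cases k) auto
qed simp

lemma Tset_nonempty: "(\<forall>x\<in>set mu. 0 \<le> x) \<Longrightarrow> sum_list mu = int n \<Longrightarrow> Tset n mu \<noteq> {}"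
proof (induction n arbitrary: mu)
  case 0
  then have z: "\<forall>x\<in>set mu. x = 0" using sum_list_nonneg_eq_0_iff by auto
  have "(\<lambda>_. undefined) \<in> Tset 0 mu" unfolding Tset_def using z by (auto simp: nth_mem)
  then show ?case by blast
next
  case (Suc n)
  obtain k where k: "k < length mu" "mu ! k > 0"
  proof (rule ccontr)
    assume "\<not> thesis"
    have "\<forall>x\<in>set mu. x = 0"
    proof
      fix x assume x: "x \<in> set mu"
      then obtain i where i: "i < length mu" "mu ! i = x" by (auto simp: in_set_conv_nth)
      then have "\<not> mu ! i > 0" using that \<open>\<not> thesis\<close> by blast
      moreover have "0 \<le> x" using Suc.prems(1) x by blast
      ultimately show "x = 0" using i by simp
    qed
    then have "sum_list mu = 0" using sum_list_nonneg_eq_0_iff[of mu] by fastforce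
    then show False using Suc.prems(2) by simp
  qed
  let ?m = "mu[k := mu ! k - 1]"
  have "\<forall>x\<in>set ?m. 0 \<le> x"
  proof
    fix x assume "x \<in> set ?m"
    then obtain i where i: "i < length mu" "?m ! i = x" by (auto simp: in_set_conv_nth)
    then show "0 \<le> x" using Suc.prems(1) k by (cases "i = k") (auto simp: nth_list_update)
  qed
  moreover have "sum_list ?m = int n" using Suc.prems(2) k by (simp add: sum_list_update_int)
  ultimately have "Tset n ?m \<noteq> {}" by (rule Suc.IH)
  then have "card (Tset n ?m) > 0" by (simp add: card_gt_0_iff)
  also have "card (Tset n ?m) \<le> (\<Sum>k<length mu. card (Tset n (mu[k := mu ! k - 1])))"
    by (rule member_le_sum[where f = "\<lambda>k. card (Tset n (mu[k := mu ! k - 1]))"]) (use k in auto)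
  also have "\<dots> = card (Tset (Suc n) mu)" by (simp add: card_Tset_Suc)
  finally have "0 < card (Tset (Suc n) mu)" .
  then show ?case by (metis card.empty less_irrefl)
qed

lemma trans_T:
  assumes f: "f \<in> Tset n mu" and g: "g \<in> Tset n mu"
  shows "\<exists>q. q permutes {..<n} \<and> (\<forall>j<n. g j = f (q j))"
proof -
  let ?L = "length mu"
  let ?G = "\<lambda>i. {j. j < n \<and> g j = i}" and ?F = "\<lambda>i. {j. j < n \<and> f j = i}"
  have cg: "card (?G i) = card (?F i)" if i: "i < ?L" for i
  proof -
    have "int (card (?G i)) = mu ! i" "int (card (?F i)) = mu ! i" using f g i unfolding Tset_def by auto
    then show ?thesis by simp
  qed
  have "\<forall>i. \<exists>h. i < ?L \<longrightarrow> bij_betw h (?G i) (?F i)"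
  proof
    fix i
    show "\<exists>h. i < ?L \<longrightarrow> bij_betw h (?G i) (?F i)"
    proof (cases "i < ?L")
      case True
      have fin: "finite (?G i)" "finite (?F i)" by auto
      obtain h where "bij_betw h (?G i) (?F i)" using finite_same_card_bij[OF fin cg[OF True]] by blast
      then show ?thesis by blast
    qed auto
  qed
  then obtain h where h0: "\<forall>i. i < ?L \<longrightarrow> bij_betw (h i) (?G i) (?F i)" using choice[of "\<lambda>i h. i < ?L \<longrightarrow> bij_betw h (?G i) (?F i)"] by blast
  then have h: "\<And>i. i < ?L \<Longrightarrow> bij_betw (h i) (?G i) (?F i)" by blast
  define q where "q j = (if j < n then h (g j) j else j)" for j
  have gl: "\<And>j. j < n \<Longrightarrow> g j < ?L" using g by (auto simp: Tset_def PiE_def Pi_def)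
  have fl: "\<And>j. j < n \<Longrightarrow> f j < ?L" using f by (auto simp: Tset_def PiE_def Pi_def)
  have qF: "\<And>j. j < n \<Longrightarrow> q j < n \<and> f (q j) = g j"
  proof -
    fix j assume j: "j < n"
    have "j \<in> ?G (g j)" using j by simp
    then have "h (g j) j \<in> ?F (g j)" using bij_betwE[OF h[OF gl[OF j]]] by blast
    then show "q j < n \<and> f (q j) = g j" using j by (simp add: q_def)
  qed
  have inj: "inj_on q {..<n}"
  proof (rule inj_onI)
    fix x y assume xy: "x \<in> {..<n}" "y \<in> {..<n}" "q x = q y"
    have "g x = f (q x)" "g y = f (q y)" using qF xy(1,2) by auto
    then have gxy: "g x = g y" using xy(3) by simp
    have "h (g x) x = h (g x) y" using xy gxy by (simp add: q_def)
    moreover have "inj_on (h (g x)) (?G (g x))" using h[OF gl] xy by (auto intro: bij_betw_imp_inj_on)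
    ultimately show "x = y" using xy gxy by (auto dest: inj_onD)
  qed
  have img: "q ` {..<n} = {..<n}"
  proof
    show "q ` {..<n} \<subseteq> {..<n}"
    proof
      fix y assume "y \<in> q ` {..<n}"
      then obtain j where "j < n" "y = q j" by auto
      then show "y \<in> {..<n}" using qF by simp
    qed
    show "{..<n} \<subseteq> q ` {..<n}"
    proof
      fix k assume k: "k \<in> {..<n}"
      then have i: "f k < ?L" using fl by simp
      have "k \<in> ?F (f k)" using k by simp
      moreover have "h (f k) ` ?G (f k) = ?F (f k)" using bij_betw_imp_surj_on[OF h[OF i]] .
      ultimately have "k \<in> h (f k) ` ?G (f k)" by simp
      then obtain j where j: "j \<in> ?G (f k)" "k = h (f k) j" by (rule imageE)
      then have "q j = k" by (simp add: q_def)
      then show "k \<in> q ` {..<n}" using j by auto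
    qed
  qed
  have "bij_betw q {..<n} {..<n}" using inj img by (simp add: bij_betw_def)
  moreover have "\<And>x. x \<notin> {..<n} \<Longrightarrow> q x = x" by (simp add: q_def)
  ultimately have "q permutes {..<n}" by (rule bij_imp_permutes)
  then show ?thesis using qF by auto
qed

lemma comp_in_T:
  assumes f: "f \<in> Tset n mu" and q: "q permutes {..<n}"
  shows "restrict (f \<circ> q) {..<n} \<in> Tset n mu"
  unfolding Tset_def mem_Collect_eq
proof (intro conjI allI impI)
  have ql: "\<And>j. j < n \<Longrightarrow> q j < n" using q by (metis lessThan_iff permutes_in_image)
  show "restrict (f \<circ> q) {..<n} \<in> {..<n} \<rightarrow>\<^sub>E {..<length mu}" using f ql by (auto simp: Tset_def PiE_def Pi_def)
  fix i assume i: "i < length mu"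
  have "q ` {j. j < n \<and> f (q j) = i} = {k. k < n \<and> f k = i}"
  proof
    show "q ` {j. j < n \<and> f (q j) = i} \<subseteq> {k. k < n \<and> f k = i}" using ql by auto
    show "{k. k < n \<and> f k = i} \<subseteq> q ` {j. j < n \<and> f (q j) = i}"
    proof
      fix k assume k: "k \<in> {k. k < n \<and> f k = i}"
      have "Hilbert_Choice.inv q k \<in> {..<n}" using k permutes_in_image[OF permutes_inv[OF q]] by simp
      moreover have "q (Hilbert_Choice.inv q k) = k" using q by (simp add: permutes_inverses)
      ultimately show "k \<in> q ` {j. j < n \<and> f (q j) = i}" using k by (intro image_eqI[of _ _ "Hilbert_Choice.inv q k"]) auto
    qed
  qed
  moreover have "inj_on q {j. j < n \<and> f (q j) = i}" by (rule inj_on_subset[OF permutes_inj[OF q] subset_UNIV])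
  ultimately have "card {j. j < n \<and> f (q j) = i} = card {k. k < n \<and> f k = i}" using card_image by fastforce
  moreover have "{j. j < n \<and> restrict (f \<circ> q) {..<n} j = i} = {j. j < n \<and> f (q j) = i}" by auto
  ultimately show "int (card {j. j < n \<and> restrict (f \<circ> q) {..<n} j = i}) = mu ! i" using f i by (auto simp: Tset_def)
qed


lemma finite_Sym[simp]: "finite (Sym n)" unfolding Sym_def by (rule finite_permutations) simp
lemma card_Sym: "card (Sym n) = fact n" unfolding Sym_def by (rule card_permutations) simp_all

lemma orbit_stab:
  assumes f0: "f0 \<in> Tset n mu"
  shows "fact n = card (Tset n mu) * card {q \<in> Sym n. \<forall>j<n. f0 (q j) = f0 j}"
proof -
  let ?T = "Tset n mu" and ?St = "{q \<in> Sym n. \<forall>j<n. f0 (q j) = f0 j}"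
  define C where "C g = {q \<in> Sym n. \<forall>j<n. f0 (q j) = g j}" for g
  have U: "Sym n = (\<Union>g\<in>?T. C g)"
  proof
    show "Sym n \<subseteq> (\<Union>g\<in>?T. C g)"
    proof
      fix q assume q: "q \<in> Sym n"
      then have "restrict (f0 \<circ> q) {..<n} \<in> ?T" using comp_in_T[OF f0] by (simp add: Sym_def)
      moreover have "q \<in> C (restrict (f0 \<circ> q) {..<n})" using q by (simp add: C_def)
      ultimately show "q \<in> (\<Union>g\<in>?T. C g)" by blast
    qed
    show "(\<Union>g\<in>?T. C g) \<subseteq> Sym n" by (auto simp: C_def)
  qed
  have disj: "\<forall>g1\<in>?T. \<forall>g2\<in>?T. g1 \<noteq> g2 \<longrightarrow> C g1 \<inter> C g2 = {}"
  proof (intro ballI impI)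
    fix g1 g2 assume g: "g1 \<in> ?T" "g2 \<in> ?T" "g1 \<noteq> g2"
    show "C g1 \<inter> C g2 = {}"
    proof (rule ccontr)
      assume "C g1 \<inter> C g2 \<noteq> {}"
      then obtain q where "q \<in> C g1" "q \<in> C g2" by blast
      then have eq: "\<forall>j\<in>{..<n}. g1 j = g2 j" by (auto simp: C_def)
      have e1: "g1 \<in> extensional {..<n}" and e2: "g2 \<in> extensional {..<n}" using g by (auto simp: Tset_def PiE_def)
      have "g1 = g2" by (rule extensionalityI[OF e1 e2]) (use eq in auto)
      then show False using g by simp
    qed
  qed
  have cardC: "card (C g) = card ?St" if g: "g \<in> ?T" for g
  proof -
    obtain q0 where q0: "q0 permutes {..<n}" "\<forall>j<n. g j = f0 (q0 j)" using trans_T[OF f0 g] by blast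
    have q0l: "\<And>j. j < n \<Longrightarrow> q0 j < n" using q0(1) by (metis lessThan_iff permutes_in_image)
    have iq0l: "\<And>j. j < n \<Longrightarrow> Hilbert_Choice.inv q0 j < n"
      using permutes_inv[OF q0(1)] by (metis lessThan_iff permutes_in_image)
    have "bij_betw (\<lambda>s. s \<circ> q0) ?St (C g)"
    proof (rule bij_betw_byWitness[where f' = "\<lambda>q. q \<circ> Hilbert_Choice.inv q0"])
      show "\<forall>s\<in>?St. s \<circ> q0 \<circ> Hilbert_Choice.inv q0 = s" using q0(1) by (simp add: comp_assoc permutes_inv_o)
      show "\<forall>q\<in>C g. q \<circ> Hilbert_Choice.inv q0 \<circ> q0 = q" using q0(1) by (simp add: comp_assoc permutes_inv_o)
      show "(\<lambda>s. s \<circ> q0) ` ?St \<subseteq> C g"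
      proof
        fix x assume "x \<in> (\<lambda>s. s \<circ> q0) ` ?St"
        then obtain s where s: "s \<in> ?St" "x = s \<circ> q0" by blast
        have "x \<in> Sym n" using s q0(1) by (auto simp: Sym_def intro: permutes_compose)
        moreover have "\<forall>j<n. f0 (x j) = g j" using s q0 q0l by auto
        ultimately show "x \<in> C g" by (simp add: C_def)
      qed
      show "(\<lambda>q. q \<circ> Hilbert_Choice.inv q0) ` C g \<subseteq> ?St"
      proof
        fix x assume "x \<in> (\<lambda>q. q \<circ> Hilbert_Choice.inv q0) ` C g"
        then obtain q where q: "q \<in> C g" "x = q \<circ> Hilbert_Choice.inv q0" by blast
        have "x \<in> Sym n" using q q0(1) by (auto simp: Sym_def C_def intro: permutes_compose permutes_inv)
        moreover have "\<forall>j<n. f0 (x j) = f0 j"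
        proof (intro allI impI)
          fix j assume j: "j < n"
          have "f0 (x j) = g (Hilbert_Choice.inv q0 j)" using q iq0l[OF j] by (simp add: C_def)
          also have "\<dots> = f0 (q0 (Hilbert_Choice.inv q0 j))" using q0(2) iq0l[OF j] by simp
          also have "\<dots> = f0 j" using q0(1) by (simp add: permutes_inverses)
          finally show "f0 (x j) = f0 j" .
        qed
        ultimately show "x \<in> ?St" by simp
      qed
    qed
    then show ?thesis by (simp add: bij_betw_same_card)
  qed
  have finC: "\<forall>g\<in>?T. finite (C g)" by (auto simp: C_def)
  have "fact n = card (Sym n)" by (simp add: card_Sym)
  also have "\<dots> = (\<Sum>g\<in>?T. card (C g))" unfolding U by (rule card_UN_disjoint[OF finite_Tset finC disj])
  also have "\<dots> = (\<Sum>g\<in>?T. card ?St)" by (rule sum.cong) (auto simp: cardC)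
  also have "\<dots> = card ?T * card ?St" by simp
  finally show ?thesis .
qed

lemma card_filter_sum: "finite A \<Longrightarrow> card {x \<in> A. P x} = (\<Sum>x\<in>A. if P x then 1 else 0)"
  by (simp add: sum.If_cases Int_def)

lemma Zsum: "(\<Sum>w\<in>Sym n. young_char n mu w) = (if Tset n mu = {} then 0 else int (fact n))"
proof (cases "Tset n mu = {}")
  case True
  then show ?thesis by (simp add: yc_eq)
next
  case False
  let ?T = "Tset n mu"
  have "(\<Sum>w\<in>Sym n. card {f \<in> ?T. \<forall>j<n. f (w j) = f j}) = (\<Sum>w\<in>Sym n. \<Sum>f\<in>?T. if (\<forall>j<n. f (w j) = f j) then 1 else 0)"
    by (simp add: card_filter_sum)
  also have "\<dots> = (\<Sum>f\<in>?T. \<Sum>w\<in>Sym n. if (\<forall>j<n. f (w j) = f j) then 1 else 0)" by (rule sum.swap)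
  also have "\<dots> = (\<Sum>f\<in>?T. card {w \<in> Sym n. \<forall>j<n. f (w j) = f j})" by (simp add: card_filter_sum)
  also have "\<dots> = (\<Sum>f\<in>?T. fact n div card ?T)"
  proof (rule sum.cong[OF refl])
    fix f assume f: "f \<in> ?T"
    have "card ?T > 0" using False by (simp add: card_gt_0_iff)
    then show "card {w \<in> Sym n. \<forall>j<n. f (w j) = f j} = fact n div card ?T"
      using orbit_stab[OF f] by simp
  qed
  also have "\<dots> = fact n"
  proof -
    obtain f where f: "f \<in> ?T" using False by blast
    have "card ?T dvd fact n" using orbit_stab[OF f] by simp
    then show ?thesis by simp
  qed
  finally show ?thesis using False by (simp add: yc_eq flip: of_nat_sum)
qed

lemma map_muS: "map (\<lambda>i. int (lam ! i) - int i + int (\<sigma> i)) [0..<length lam] = muS (map int lam) \<sigma>"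
  by (rule nth_equalityI) auto

lemma chi_sum: "(\<Sum>w\<in>Sym n. chi n lam w) =
   (\<Sum>\<sigma> | \<sigma> permutes {..<length lam}. sign \<sigma> * (if Tset n (muS (map int lam) \<sigma>) = {} then 0 else int (fact n)))"
proof -
  have "(\<Sum>w\<in>Sym n. chi n lam w) = (\<Sum>w\<in>Sym n. \<Sum>\<sigma> | \<sigma> permutes {..<length lam}. sign \<sigma> * young_char n (muS (map int lam) \<sigma>) w)"
    unfolding chi_def map_muS ..
  also have "\<dots> = (\<Sum>\<sigma> | \<sigma> permutes {..<length lam}. sign \<sigma> * (\<Sum>w\<in>Sym n. young_char n (muS (map int lam) \<sigma>) w))"
    by (subst sum.swap) (simp add: sum_distrib_left)
  also have "\<dots> = (\<Sum>\<sigma> | \<sigma> permutes {..<length lam}. sign \<sigma> * (if Tset n (muS (map int lam) \<sigma>) = {} then 0 else int (fact n)))"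
    by (simp add: Zsum)
  finally show ?thesis .
qed

lemma muS_sum: assumes "\<sigma> permutes {..<length a}" shows "sum_list (muS a \<sigma>) = sum_list a"
proof -
  let ?l = "length a"
  have b: "bij_betw \<sigma> {0..<?l} {0..<?l}" using permutes_imp_bij[OF assms] by (simp add: atLeast0LessThan)
  have "sum_list (muS a \<sigma>) = (\<Sum>i=0..<?l. a ! i - int i + int (\<sigma> i))" by (simp add: sum_list_sum_nth)
  also have "\<dots> = (\<Sum>i=0..<?l. a ! i) - (\<Sum>i=0..<?l. int i) + (\<Sum>i=0..<?l. int (\<sigma> i))"
    by (simp add: sum.distrib sum_subtractf)
  also have "(\<Sum>i=0..<?l. int (\<sigma> i)) = (\<Sum>i=0..<?l. int i)"
    using sum.reindex_bij_betw[OF b, of int] by simp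
  finally show ?thesis by (simp add: sum_list_sum_nth)
qed

lemma Tset_empty_iff: "sum_list mu = int n \<Longrightarrow> Tset n mu = {} \<longleftrightarrow> (\<exists>i<length mu. mu ! i < 0)"
  using Tset_neg Tset_nonempty by (metis in_set_conv_nth not_le)

lemma chi_orth:
  assumes p: "is_partition n lam" and l: "length lam \<ge> 2"
  shows "(\<Sum>w\<in>Sym n. chi n lam w) = 0"
proof -
  let ?a = "map int lam" and ?l = "length lam"
  have pos: "\<And>i. i < ?l \<Longrightarrow> lam ! i > 0" using p by (auto simp: is_partition_def)
  have sa: "sum_list ?a = int n" using p by (simp add: is_partition_def sum_list_of_nat)
  have E: "Tset n (muS ?a \<sigma>) = {} \<longleftrightarrow> (\<exists>i<?l. 2 \<le> i \<and> muS ?a \<sigma> ! i < 0)" if s: "\<sigma> permutes {..<?l}" for \<sigma>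
  proof -
    have "sum_list (muS ?a \<sigma>) = int n" using muS_sum[of \<sigma> ?a] s sa by simp
    then have "Tset n (muS ?a \<sigma>) = {} \<longleftrightarrow> (\<exists>i<?l. muS ?a \<sigma> ! i < 0)" by (simp add: Tset_empty_iff)
    also have "\<dots> \<longleftrightarrow> (\<exists>i<?l. 2 \<le> i \<and> muS ?a \<sigma> ! i < 0)"
    proof
      assume "\<exists>i<?l. muS ?a \<sigma> ! i < 0"
      then obtain i where i: "i < ?l" "muS ?a \<sigma> ! i < 0" by blast
      have "i \<noteq> 0" using i by simp
      moreover have "i \<noteq> 1"
      proof
        assume i1: "i = 1"
        then have "int (lam ! 1) - 1 + int (\<sigma> 1) < 0" using i by simp
        moreover have "lam ! 1 > 0" using pos[of 1] l by simp
        ultimately show False by simp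
      qed
      ultimately show "\<exists>i<?l. 2 \<le> i \<and> muS ?a \<sigma> ! i < 0" using i by (intro exI[of _ i]) auto
    qed auto
    finally show ?thesis .
  qed
  have "(\<Sum>w\<in>Sym n. chi n lam w) = (\<Sum>\<sigma> | \<sigma> permutes {..<?l}. sign \<sigma> * (if Tset n (muS ?a \<sigma>) = {} then 0 else int (fact n)))"
    by (rule chi_sum)
  also have "\<dots> = 0"
  proof (rule sum_sign_zero)
    fix \<sigma> assume s: "\<sigma> permutes {..<?l}"
    have s2: "\<sigma> \<circ> transpose 0 1 permutes {..<?l}" using s l by (intro permutes_compose permutes_swap_id) auto
    have "\<And>i. 2 \<le> i \<Longrightarrow> i < ?l \<Longrightarrow> muS ?a (\<sigma> \<circ> transpose 0 1) ! i = muS ?a \<sigma> ! i"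
      by (simp add: transpose_def)
    then have "(\<exists>i<?l. 2 \<le> i \<and> muS ?a (\<sigma> \<circ> transpose 0 1) ! i < 0) = (\<exists>i<?l. 2 \<le> i \<and> muS ?a \<sigma> ! i < 0)"
      by auto
    then show "(if Tset n (muS ?a (\<sigma> \<circ> transpose 0 1)) = {} then 0 else int (fact n)) =
               (if Tset n (muS ?a \<sigma>) = {} then 0 else int (fact n))" using E[OF s] E[OF s2] by simp
  qed (use l in auto)
  finally show ?thesis .
qed

lemma perm1: "\<sigma> permutes {..<Suc 0} \<longleftrightarrow> \<sigma> = id"
proof
  assume s: "\<sigma> permutes {..<Suc 0}"
  have "\<sigma> 0 \<in> {..<Suc 0}" using permutes_in_image[OF s, of 0] by simp
  then have "\<sigma> 0 = 0" by simp
  then show "\<sigma> = id" using s by (auto simp: fun_eq_iff permutes_not_in) (metis permutes_not_in lessThan_iff less_Suc0 \<open>\<sigma> 0 = 0\<close>)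
qed (simp add: permutes_id)

lemma chi_triv: assumes w: "w \<in> Sym n" shows "chi n [n] w = 1"
proof -
  let ?f0 = "restrict (\<lambda>_. 0::nat) {..<n}"
  have wl: "\<And>j. j < n \<Longrightarrow> w j < n" using w by (metis Sym_def lessThan_iff mem_Collect_eq permutes_in_image)
  have T: "Tset n [int n] = {?f0}"
  proof
    show "Tset n [int n] \<subseteq> {?f0}"
    proof
      fix f assume f: "f \<in> Tset n [int n]"
      then have "f \<in> {..<n} \<rightarrow>\<^sub>E {..<1}" by (simp add: Tset_def)
      then have "f = ?f0" by (auto simp: fun_eq_iff PiE_def Pi_def extensional_def)
      then show "f \<in> {?f0}" by simp
    qed
    have "{j. j < n \<and> ?f0 j = 0} = {..<n}" by auto
    then show "{?f0} \<subseteq> Tset n [int n]" by (simp add: Tset_def)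
  qed
  have "{f \<in> Tset n [int n]. \<forall>j<n. f (w j) = f j} = {?f0}" using T wl by auto
  then have "young_char n [int n] w = 1" by (simp add: yc_eq)
  moreover have "{\<sigma>. \<sigma> permutes {..<length [n]}} = {id}" using perm1 by auto
  ultimately show ?thesis unfolding chi_def by simp
qed

lemma fdeg_triv: "fdeg n [n] = 1"
  unfolding fdeg_def by (rule chi_triv) (simp add: Sym_def permutes_id)


definition Pm :: "nat \<Rightarrow> real mat" where
  "Pm N = mat N N (\<lambda>(i,j). if j = 0 then 1 else if i = j then 1 else 0)"
definition Qm :: "nat \<Rightarrow> real mat" where
  "Qm N = mat N N (\<lambda>(i,j). if j = 0 then (if i = 0 then 1 else -1) else if i = j then 1 else 0)"

lemma Pm_carrier[simp]: "Pm N \<in> carrier_mat N N" by (simp add: Pm_def)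
lemma Qm_carrier[simp]: "Qm N \<in> carrier_mat N N" by (simp add: Qm_def)

lemma prodXP:
  assumes X: "X \<in> carrier_mat N N" and k: "k < N" and j: "j < N"
  shows "(X * Pm N) $$ (k,j) = (if j = 0 then (\<Sum>l<N. X $$ (k,l)) else X $$ (k,j))"
proof -
  have "(X * Pm N) $$ (k,j) = (\<Sum>l\<in>{0..<N}. X $$ (k,l) * (if j = 0 then 1 else if l = j then 1 else 0))"
    using X k j by (simp add: scalar_prod_def Pm_def)
  also have "\<dots> = (if j = 0 then (\<Sum>l<N. X $$ (k,l)) else X $$ (k,j))"
    using j by (cases "j = 0") (simp_all add: atLeast0LessThan if_distrib cong: if_cong)
  finally show ?thesis .
qed

lemma prodQY:
  assumes Y: "Y \<in> carrier_mat N N" and i: "i < N" and j: "j < N"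
  shows "(Qm N * Y) $$ (i,j) = (if i = 0 then Y $$ (0,j) else Y $$ (i,j) - Y $$ (0,j))"
proof -
  let ?q = "\<lambda>l. (if l = 0 then (if i = 0 then 1 else -1) else if i = l then 1 else 0) * Y $$ (l,j)"
  have "(Qm N * Y) $$ (i,j) = (\<Sum>l\<in>{0..<N}. ?q l)"
    using Y i j by (simp add: scalar_prod_def Qm_def)
  also have "\<dots> = ?q 0 + (\<Sum>l\<in>{0..<N} - {0}. ?q l)"
    using i by (subst sum.remove[of _ 0]) auto
  also have "(\<Sum>l\<in>{0..<N} - {0}. ?q l) = (\<Sum>l\<in>{0..<N} - {0}. if l = i then Y $$ (i,j) else 0)"
    by (rule sum.cong) auto
  also have "\<dots> = (if i = 0 then 0 else Y $$ (i,j))" using i by (simp add: sum.delta')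
  finally show ?thesis by auto
qed

lemma QXP:
  assumes X: "X \<in> carrier_mat N N" and i: "i < N" and j: "j < N"
  shows "(Qm N * X * Pm N) $$ (i,j) =
    (if i = 0 then (if j = 0 then (\<Sum>l<N. X $$ (0,l)) else X $$ (0,j))
     else (if j = 0 then (\<Sum>l<N. X $$ (i,l)) - (\<Sum>l<N. X $$ (0,l)) else X $$ (i,j) - X $$ (0,j)))"
proof -
  have "Qm N * X * Pm N = Qm N * (X * Pm N)" using X by (simp add: assoc_mult_mat[of _ N N _ N _ N])
  then show ?thesis using X i j by (simp add: prodQY[of _ N] prodXP[OF X])
qed

lemma QP: "Qm N * Pm N = 1\<^sub>m N"
proof (rule eq_matI)
  fix i j assume ij: "i < dim_row (1\<^sub>m N)" "j < dim_col (1\<^sub>m N)"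
  then show "(Qm N * Pm N) $$ (i,j) = 1\<^sub>m N $$ (i,j)"
    by (simp add: prodQY[of _ N] Pm_def)
qed (auto simp: Pm_def Qm_def)

lemma PQ: "Pm N * Qm N = 1\<^sub>m N"
  using mat_mult_left_right_inverse[OF Qm_carrier Pm_carrier QP] .

lemma sim: assumes X: "X \<in> carrier_mat N N" shows "char_poly X = char_poly (Qm N * X * Pm N)"
proof (rule char_poly_similar)
  have c: "Qm N * X \<in> carrier_mat N N" "X * Pm N \<in> carrier_mat N N"
    using mult_carrier_mat[OF Qm_carrier X] mult_carrier_mat[OF X Pm_carrier] by auto
  have "Pm N * (Qm N * X * Pm N) = (Pm N * (Qm N * X)) * Pm N"
    using assoc_mult_mat[OF Pm_carrier c(1) Pm_carrier] by simp
  also have "Pm N * (Qm N * X) = (Pm N * Qm N) * X" using assoc_mult_mat[OF Pm_carrier Qm_carrier X] by simp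
  also have "\<dots> = X" using X by (simp add: PQ)
  finally have "Pm N * (Qm N * X * Pm N) * Qm N = X * Pm N * Qm N" by simp
  also have "\<dots> = X * (Pm N * Qm N)" using assoc_mult_mat[OF X Pm_carrier Qm_carrier] by simp
  also have "\<dots> = X" using X by (simp add: PQ)
  finally have "X = Pm N * (Qm N * X * Pm N) * Qm N" by simp
  moreover have "Qm N * X * Pm N \<in> carrier_mat N N" using mult_carrier_mat[OF c(1) Pm_carrier] .
  ultimately have "similar_mat_wit X (Qm N * X * Pm N) (Pm N) (Qm N)" unfolding similar_mat_wit_def Let_def
    using X PQ QP by auto
  then show "similar_mat X (Qm N * X * Pm N)" unfolding similar_mat_def by blast
qed

lemma cp_block:
  assumes X: "X \<in> carrier_mat (Suc m) (Suc m)" and z: "\<And>i. 0 < i \<Longrightarrow> i < Suc m \<Longrightarrow> X $$ (i,0) = 0"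
  shows "char_poly X = [:- X $$ (0,0), 1:] * char_poly (mat m m (\<lambda>(i,j). X $$ (Suc i, Suc j)))"
proof -
  let ?A1 = "mat 1 1 (\<lambda>_. X $$ (0,0))" and ?A2 = "mat 1 m (\<lambda>(i,j). X $$ (0, Suc j))"
    and ?A3 = "mat m m (\<lambda>(i,j). X $$ (Suc i, Suc j))"
  have "X = four_block_mat ?A1 ?A2 (0\<^sub>m m 1) ?A3"
  proof (rule eq_matI)
    fix i j assume ij: "i < dim_row (four_block_mat ?A1 ?A2 (0\<^sub>m m 1) ?A3)" "j < dim_col (four_block_mat ?A1 ?A2 (0\<^sub>m m 1) ?A3)"
    then show "X $$ (i,j) = four_block_mat ?A1 ?A2 (0\<^sub>m m 1) ?A3 $$ (i,j)"
      using z by (cases i; cases j) auto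
  qed (use X in auto)
  then have "char_poly X = char_poly ?A1 * char_poly ?A3"
    using char_poly_four_block_zeros_col[of ?A1 ?A2 m ?A3] by simp
  moreover have "char_poly ?A1 = [:- X $$ (0,0), 1:]"
    by (subst char_poly_upper_triangular[of _ 1]) (auto simp: upper_triangular_def diag_mat_def)
  ultimately show ?thesis by simp
qed

lemma cp_eval: fixes Y :: "real mat" assumes Y: "Y \<in> carrier_mat m m"
  shows "poly (char_poly Y) x = det (mat m m (\<lambda>(i,j). (if i = j then x else 0) - Y $$ (i,j)))"
proof -
  have "poly (char_poly Y) x = det (- char_matrix Y x)" by (rule char_poly_matrix[OF Y])
  also have "- char_matrix Y x = mat m m (\<lambda>(i,j). (if i = j then x else 0) - Y $$ (i,j))"
    using Y by (intro eq_matI) (auto simp: char_matrix_def)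
  finally show ?thesis .
qed

lemma prod_list_neg: "(\<Prod>e\<leftarrow>L. - (f e :: real)) = (-1) ^ length L * (\<Prod>e\<leftarrow>L. f e)"
  by (induction L) auto

lemma cp_shift:
  fixes X :: "real mat"
  assumes X: "X \<in> carrier_mat m m" and cX: "char_poly X = (\<Prod>e\<leftarrow>L. [:- e, 1:])" and L: "length L = m"
  shows "char_poly (mat m m (\<lambda>(i,j). - 2 * (if i = j then 1 else 0) - X $$ (i,j))) = (\<Prod>e\<leftarrow>L. [:- (- 2 - e), 1:])"
proof -
  let ?Y = "mat m m (\<lambda>(i,j). - 2 * (if i = j then 1 else 0) - X $$ (i,j))"
  have "poly (char_poly ?Y) x = poly (\<Prod>e\<leftarrow>L. [:- (- 2 - e), 1:]) x" for x
  proof -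
    let ?Z = "mat m m (\<lambda>(i,j). (if i = j then x + 2 else 0) + X $$ (i,j))"
    have f1: "poly (char_poly ?Y) x = det ?Z"
    proof -
      have "poly (char_poly ?Y) x = det (mat m m (\<lambda>(i,j). (if i = j then x else 0) - ?Y $$ (i,j)))"
        by (rule cp_eval) simp
      also have "mat m m (\<lambda>(i,j). (if i = j then x else 0) - ?Y $$ (i,j)) = ?Z" by (rule eq_matI) auto
      finally show ?thesis .
    qed
    have f2: "poly (char_poly X) (- (x + 2)) = det ((-1) \<cdot>\<^sub>m ?Z)"
      unfolding cp_eval[OF X] by (rule arg_cong[where f = det], rule eq_matI) auto
    have f3: "det ((-1) \<cdot>\<^sub>m ?Z) = (-1) ^ m * det ?Z" by simp
    have f4: "poly (char_poly X) (- (x + 2)) = (\<Prod>e\<leftarrow>L. - (x + 2 + e))"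
      unfolding cX poly_prod_list by (simp add: o_def algebra_simps)
    have f5: "(\<Prod>e\<leftarrow>L. - (x + 2 + e)) = (-1) ^ m * (\<Prod>e\<leftarrow>L. x + 2 + e)"
      using prod_list_neg[of "\<lambda>e. x + 2 + e" L] L by simp
    have f6: "poly (\<Prod>e\<leftarrow>L. [:- (- 2 - e), 1:]) x = (\<Prod>e\<leftarrow>L. x + 2 + e)"
      unfolding poly_prod_list by (simp add: o_def algebra_simps)
    have "(-1::real) ^ m * det ?Z = (-1) ^ m * (\<Prod>e\<leftarrow>L. x + 2 + e)" using f2 f3 f4 f5 by simp
    then have "det ?Z = (\<Prod>e\<leftarrow>L. x + 2 + e)" by simp
    then show ?thesis using f1 f6 by simp
  qed
  then show ?thesis using poly_eq_poly_eq_iff by blast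
qed


lemma char_poly_key:
  fixes A :: "real mat"
  assumes A: "A \<in> carrier_mat N N" and N: "N = Suc m"
    and rs: "\<And>i. i < N \<Longrightarrow> (\<Sum>l<N. A $$ (i,l)) = d"
    and les: "length es = N" and es0: "es ! 0 = d" and cA: "char_poly A = prod_list (map (\<lambda>x. [:- x, 1:]) es)"
  shows "char_poly (mat N N (\<lambda>(i,j). 2 * (if i \<noteq> j then 1 else 0) - A $$ (i,j))) =
     [:- (2 * (real N - 1) - d), 1:] * prod_list (map (\<lambda>x. [:- (- 2 - x), 1:]) (tl es))"
proof -
  define M0 where "M0 = (mat N N (\<lambda>(i,j). 2 * (if i \<noteq> j then 1 else 0) - A $$ (i,j)) :: real mat)"
  have M: "M0 \<in> carrier_mat N N" by (simp add: M0_def)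
  have M0v: "M0 $$ (i,j) = 2 * (if i \<noteq> j then 1 else 0) - A $$ (i,j)" if "i < N" "j < N" for i j
    using that by (simp add: M0_def)
  define B where "B = Qm N * A * Pm N"
  define C where "C = Qm N * M0 * Pm N"
  have Bc: "B \<in> carrier_mat N N" unfolding B_def by (rule mult_carrier_mat[OF mult_carrier_mat[OF Qm_carrier A] Pm_carrier])
  have Cc: "C \<in> carrier_mat N N" unfolding C_def by (rule mult_carrier_mat[OF mult_carrier_mat[OF Qm_carrier M] Pm_carrier])
  have rsM: "(\<Sum>l<N. M0 $$ (i,l)) = 2 * (real N - 1) - d" if i: "i < N" for i
  proof -
    have "(\<Sum>l<N. M0 $$ (i,l)) = (\<Sum>l<N. 2 - 2 * (if l = i then 1 else 0) - A $$ (i,l))"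
      using i by (intro sum.cong) (auto simp: M0v)
    also have "\<dots> = 2 * real N - 2 - d"
    proof -
      have "(\<Sum>l<N. 2 * (if l = i then 1 else 0 :: real)) = 2" using i by (simp flip: sum_distrib_left)
      then show ?thesis using i rs[OF i] by (simp add: sum_subtractf)
    qed
    finally show ?thesis by simp
  qed
  let ?B3 = "mat m m (\<lambda>(i,j). B $$ (Suc i, Suc j))"
  let ?C3 = "mat m m (\<lambda>(i,j). C $$ (Suc i, Suc j))"
  have Bv: "B $$ (i,j) = (if i = 0 then (if j = 0 then d else A $$ (0,j))
     else (if j = 0 then 0 else A $$ (i,j) - A $$ (0,j)))" if "i < N" "j < N" for i j
    unfolding B_def using QXP[OF A that] rs that by auto
  have Cv: "C $$ (i,j) = (if i = 0 then (if j = 0 then 2 * (real N - 1) - d else M0 $$ (0,j))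
     else (if j = 0 then 0 else M0 $$ (i,j) - M0 $$ (0,j)))" if "i < N" "j < N" for i j
    unfolding C_def using QXP[OF M that] rsM that by auto
  have cA2: "char_poly A = [:- d, 1:] * char_poly ?B3"
    unfolding sim[OF A] B_def[symmetric] using cp_block[of B m] Bc Bv N by auto
  have "es = d # tl es" using les es0 N by (cases es) auto
  then have "char_poly A = [:- d, 1:] * prod_list (map (\<lambda>x. [:- x, 1:]) (tl es))"
    using cA by (metis list.simps(9) prod_list.Cons)
  then have eq: "[:- d, 1:] * char_poly ?B3 = [:- d, 1:] * prod_list (map (\<lambda>x. [:- x, 1:]) (tl es))"
    using cA2 by metis
  have nz: "[:- d, 1:] \<noteq> (0 :: real poly)" by simp
  have cB3: "char_poly ?B3 = prod_list (map (\<lambda>x. [:- x, 1:]) (tl es))"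
    using mult_left_cancel[OF nz] eq by blast
  have C3: "?C3 = mat m m (\<lambda>(i,j). - 2 * (if i = j then 1 else 0) - ?B3 $$ (i,j))"
    by (rule eq_matI) (auto simp: Cv Bv N M0v)
  have "char_poly (mat N N (\<lambda>(i,j). 2 * (if i \<noteq> j then 1 else 0) - A $$ (i,j))) = char_poly C"
    unfolding C_def M0_def[symmetric] by (rule sim[OF M])
  also have "\<dots> = [:- (2 * (real N - 1) - d), 1:] * char_poly ?C3" using cp_block[of C m] Cc Cv N by auto
  also have "char_poly ?C3 = prod_list (map (\<lambda>x. [:- (- 2 - x), 1:]) (tl es))"
    unfolding C3 by (rule cp_shift) (use cB3 les N in \<open>auto simp: o_def\<close>)
  finally show ?thesis .
qed

lemma adj_rowsum:
  assumes w: "w \<in> Sym n"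
  shows "card {v \<in> Sym n. adj n w v} = card (Der n)"
proof -
  have wp: "w permutes {..<n}" using w by (simp add: Sym_def)
  have "bij_betw (\<lambda>s. s \<circ> w) (Der n) {v \<in> Sym n. adj n w v}"
  proof (rule bij_betw_byWitness[where f' = "\<lambda>v. v \<circ> Hilbert_Choice.inv w"])
    show "\<forall>s\<in>Der n. s \<circ> w \<circ> Hilbert_Choice.inv w = s" using wp by (simp add: comp_assoc permutes_inv_o)
    show "\<forall>v\<in>{v \<in> Sym n. adj n w v}. v \<circ> Hilbert_Choice.inv w \<circ> w = v" using wp by (simp add: comp_assoc permutes_inv_o)
    show "(\<lambda>s. s \<circ> w) ` Der n \<subseteq> {v \<in> Sym n. adj n w v}"
      using wp w by (auto simp: adj_def Der_def Sym_def comp_assoc permutes_inv_o intro: permutes_compose)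
    show "(\<lambda>v. v \<circ> Hilbert_Choice.inv w) ` {v \<in> Sym n. adj n w v} \<subseteq> Der n"
      by (auto simp: adj_def)
  qed
  then show ?thesis by (simp add: bij_betw_same_card)
qed

lemma card_filter_sum_real: "finite A \<Longrightarrow> (\<Sum>x\<in>A. if P x then 1 else 0 :: real) = real (card {x \<in> A. P x})"
  by (simp add: sum.If_cases Int_def)

lemma part2:
  assumes n: "n \<ge> 4" and e: "bij_betw e {..<fact n} (Sym n)" and les: "length es = fact n"
    and es0: "es ! 0 = real (card (Der n))"
    and cA: "char_poly (adj_mat n e) = prod_list (map (\<lambda>x. [:- x, 1:]) es)"
  shows "char_poly (dist_mat n e) =
              [:- (2 * (real (fact n) - 1) - es ! 0), 1:] *
              prod_list (map (\<lambda>x. [:- (- 2 - x), 1:]) (tl es))"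
proof -
  let ?N = "fact n :: nat"
  have eS: "\<And>i. i < ?N \<Longrightarrow> e i \<in> Sym n" using e by (auto dest: bij_betwE)
  have einj: "\<And>i j. i < ?N \<Longrightarrow> j < ?N \<Longrightarrow> e i = e j \<longleftrightarrow> i = j" using e by (auto simp: bij_betw_def inj_on_def)
  obtain m where N: "?N = Suc m" by (metis fact_gt_zero gr0_implies_Suc)
  have D: "dist_mat n e = mat ?N ?N (\<lambda>(i,j). 2 * (if i \<noteq> j then 1 else 0) - adj_mat n e $$ (i,j))"
  proof (rule eq_matI)
    fix i j assume ij: "i < dim_row (mat ?N ?N (\<lambda>(i,j). 2 * (if i \<noteq> j then 1 else 0) - adj_mat n e $$ (i,j)))"
      "j < dim_col (mat ?N ?N (\<lambda>(i,j). 2 * (if i \<noteq> j then 1 else 0) - adj_mat n e $$ (i,j)))"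
    then have ij': "i < ?N" "j < ?N" by auto
    have "int (gdist n (e i) (e j)) = 2 * (if e i \<noteq> e j then 1 else 0) - (if adj n (e i) (e j) then 1 else 0)"
      by (rule gdist_val[OF n eS eS]) (use ij' in auto)
    then have "real (gdist n (e i) (e j)) = 2 * (if i \<noteq> j then 1 else 0) - (if adj n (e i) (e j) then 1 else 0)"
      using einj[OF ij'] by (auto split: if_splits)
    then show "dist_mat n e $$ (i,j) = mat ?N ?N (\<lambda>(i,j). 2 * (if i \<noteq> j then 1 else 0) - adj_mat n e $$ (i,j)) $$ (i,j)"
      using ij' by (simp add: dist_mat_def adj_mat_def)
  qed (auto simp: dist_mat_def)
  have rs: "(\<Sum>l<?N. adj_mat n e $$ (i,l)) = real (card (Der n))" if i: "i < ?N" for i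
  proof -
    have "(\<Sum>l<?N. adj_mat n e $$ (i,l)) = (\<Sum>l<?N. if adj n (e i) (e l) then 1 else 0)"
      using i by (intro sum.cong) (auto simp: adj_mat_def)
    also have "\<dots> = real (card {l \<in> {..<?N}. adj n (e i) (e l)})"
      by (simp add: card_filter_sum_real)
    also have "e ` {l \<in> {..<?N}. adj n (e i) (e l)} = {v \<in> Sym n. adj n (e i) v}"
      using e by (auto simp: bij_betw_def)
    then have "card {l \<in> {..<?N}. adj n (e i) (e l)} = card {v \<in> Sym n. adj n (e i) v}"
      using e by (metis (no_types, lifting) bij_betw_def card_image inj_on_subset mem_Collect_eq subsetI)
    also have "\<dots> = card (Der n)" by (rule adj_rowsum[OF eS[OF i]])
    finally show ?thesis .
  qed
  show ?thesis unfolding D es0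
    by (rule char_poly_key[OF _ N rs les es0 cA]) (simp add: adj_mat_def)
qed


lemma Der_sub: "Der n \<subseteq> Sym n" by (auto simp: Der_def)
lemma id_Sym: "id \<in> Sym n" by (simp add: Sym_def permutes_id)
lemma finite_Der[simp]: "finite (Der n)" using finite_subset[OF Der_sub] by simp

lemma gamma_num:
  assumes n: "n \<ge> 4"
  shows "(\<Sum>w\<in>Sym n - {id}. real (lenD n w) * c w) = 2 * (\<Sum>w\<in>Sym n. c w) - (\<Sum>w\<in>Der n. c w) - 2 * c id"
proof -
  have n1: "n \<ge> 1" using n by simp
  have DS: "Der n \<subseteq> Sym n - {id}" using Der_sub id_not_Der[OF n1] by auto
  have fin: "finite (Sym n - {id})" by simp
  have "(\<Sum>w\<in>Sym n - {id}. real (lenD n w) * c w) =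
        (\<Sum>w\<in>(Sym n - {id}) - Der n. real (lenD n w) * c w) + (\<Sum>w\<in>Der n. real (lenD n w) * c w)"
    by (rule sum.subset_diff[OF DS fin])
  also have "(\<Sum>w\<in>Der n. real (lenD n w) * c w) = (\<Sum>w\<in>Der n. c w)"
    by (rule sum.cong) (auto simp: lenD_der[OF n1])
  also have "(\<Sum>w\<in>(Sym n - {id}) - Der n. real (lenD n w) * c w) = (\<Sum>w\<in>(Sym n - {id}) - Der n. 2 * c w)"
    by (rule sum.cong) (auto simp: lenD_two[OF n])
  also have "\<dots> = 2 * (\<Sum>w\<in>(Sym n - {id}) - Der n. c w)" by (simp add: sum_distrib_left)
  also have "(\<Sum>w\<in>(Sym n - {id}) - Der n. c w) = (\<Sum>w\<in>Sym n - {id}. c w) - (\<Sum>w\<in>Der n. c w)"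
    using sum.subset_diff[OF DS fin, of c] by simp
  also have "(\<Sum>w\<in>Sym n - {id}. c w) = (\<Sum>w\<in>Sym n. c w) - c id"
    using sum.remove[OF finite_Sym id_Sym, of c] by simp
  finally show ?thesis by (simp add: id_def algebra_simps)
qed

lemma part_len2: assumes "is_partition n lam" "lam \<noteq> [n]" "n \<ge> 4" shows "length lam \<ge> 2"
proof (rule ccontr)
  assume "\<not> length lam \<ge> 2"
  then have "lam = [] \<or> (\<exists>x. lam = [x])" by (cases lam; cases "tl lam") auto
  then show False using assms by (auto simp: is_partition_def)
qed

theorem proposition3p2:
  fixes n :: nat
  assumes "n \<ge> 4"
  shows "(\<forall>w\<in>Sym n. \<forall>v\<in>Sym n.
            int (gdist n w v) = 2 * (if w \<noteq> v then 1 else 0) - (if adj n w v then 1 else 0))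
     \<and> (\<forall>e es. bij_betw e {..<fact n} (Sym n) \<longrightarrow> length es = fact n \<longrightarrow>
            es ! 0 = real (card (Der n)) \<longrightarrow>
            char_poly (adj_mat n e) = prod_list (map (\<lambda>x. [:- x, 1:]) es) \<longrightarrow>
            char_poly (dist_mat n e) =
              [:- (2 * (real (fact n) - 1) - es ! 0), 1:] *
              prod_list (map (\<lambda>x. [:- (- 2 - x), 1:]) (tl es)))
     \<and> gamma n [n] = 2 * (real (fact n) - 1) - real (card (Der n))
     \<and> (\<forall>lam. is_partition n lam \<longrightarrow> lam \<noteq> [n] \<longrightarrow> gamma n lam = - 2 - eta n lam)"
proof (intro conjI allI ballI impI)
  fix w v assume "w \<in> Sym n" "v \<in> Sym n"
  then show "int (gdist n w v) = 2 * (if w \<noteq> v then 1 else 0) - (if adj n w v then 1 else 0)"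
    by (rule gdist_val[OF assms])
next
  fix e es
  assume "bij_betw e {..<fact n} (Sym n)" "length es = fact n" "es ! 0 = real (card (Der n))"
    "char_poly (adj_mat n e) = prod_list (map (\<lambda>x. [:- x, 1:]) es)"
  then show "char_poly (dist_mat n e) =
              [:- (2 * (real (fact n) - 1) - es ! 0), 1:] *
              prod_list (map (\<lambda>x. [:- (- 2 - x), 1:]) (tl es))"
    by (rule part2[OF assms])
next
  let ?c = "\<lambda>w. real_of_int (chi n [n] w)"
  have c1: "\<And>w. w \<in> Sym n \<Longrightarrow> ?c w = 1" by (simp add: chi_triv)
  have "(\<Sum>w\<in>Sym n. ?c w) = real (fact n)" using c1 by (simp add: card_Sym)
  moreover have "(\<Sum>w\<in>Der n. ?c w) = real (card (Der n))" using c1 Der_sub by (simp add: subset_iff)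
  moreover have "?c id = 1" using c1 id_Sym by simp
  ultimately show "gamma n [n] = 2 * (real (fact n) - 1) - real (card (Der n))"
    unfolding gamma_def gamma_num[OF assms, of ?c] fdeg_triv by simp
next
  fix lam assume p: "is_partition n lam" and ne: "lam \<noteq> [n]"
  let ?c = "\<lambda>w. real_of_int (chi n lam w)"
  have "(\<Sum>w\<in>Sym n. chi n lam w) = 0" by (rule chi_orth[OF p part_len2[OF p ne assms]])
  then have s0: "(\<Sum>w\<in>Sym n. ?c w) = 0" by (simp flip: of_int_sum)
  have f: "real_of_int (fdeg n lam) > 0" using fdeg_pos[OF p] by simp
  have "gamma n lam = (- (\<Sum>w\<in>Der n. ?c w) - 2 * real_of_int (fdeg n lam)) / real_of_int (fdeg n lam)"
    unfolding gamma_def gamma_num[OF assms, of ?c] s0 fdeg_def by simp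
  also have "\<dots> = - 2 - eta n lam" using f unfolding eta_def by (simp add: field_simps)
  finally show "gamma n lam = - 2 - eta n lam" .
qed


end
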